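(* Let $n\ge 4$ and let $f:\{0,1\}^n\to\{0,1\}$ be fully sensitive at $0$, and let $p$ be its symmetrization polynomial. Then \[ \sup_{x\in[0,n]} |p'''(x)| \geq 1 - p(3). \]
   Context: $f$ is fully sensitive at $0$ if $f(0^n)=0$ and $f(e_i)=1$ for every $i=1,\dots,n$, where $e_i$ is the $i$-th unit vector. Let $q$ be the unique multilinear real polynomial agreeing with $f$ on $\{0,1\}^n$, of degree $d(f)$. The symmetrization polynomial of $f$ is the univariate real polynomial $p$ of degree at most $d(f)$ such that $p(x_1+\dots+x_n) = \frac{1}{n!}\sum_{\pi\in S_n} q(\pi(x))$ for all $x\in\{0,1\}^n$, where $\pi(x)$ permutes the coordinates of $x$; equivalently, for $k=0,\dots,n$, $p(k)$ is the fraction of inputs of Hamming weight $k$ on which $f$ equals $1$ (such $p$ exists and is unique). *)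

theory Defs
  imports "HOL-Computational_Algebra.Polynomial" Complex_Main
begin

(* A Boolean function f : {0,1}^n -> {0,1} is represented as f :: nat set => bool,
   where an input x in {0,1}^n corresponds to the set {i < n. x_i = 1} \<subseteq> {..<n}.
   Only the values on subsets of {..<n} matter. *)

definition bval :: "bool \<Rightarrow> real" where
  "bval b = (if b then 1 else 0)"

definition fully_sensitive_at_0 :: "nat \<Rightarrow> (nat set \<Rightarrow> bool) \<Rightarrow> bool" where
  "fully_sensitive_at_0 n f \<longleftrightarrow> \<not> f {} \<and> (\<forall>i<n. f {i})"

(* Coefficient of the monomial prod_{i in S} x_i in the unique multilinear
   polynomial q agreeing with f on {0,1}^n (Moebius inversion). *)
definition ml_coeff :: "(nat set \<Rightarrow> bool) \<Rightarrow> nat set \<Rightarrow> real" where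
  "ml_coeff f S = (\<Sum>T\<in>Pow S. (-1) ^ card (S - T) * bval (f T))"

definition ml_degree :: "nat \<Rightarrow> (nat set \<Rightarrow> bool) \<Rightarrow> nat" where
  "ml_degree n f = Max (insert 0 {card S | S. S \<subseteq> {..<n} \<and> ml_coeff f S \<noteq> 0})"

definition is_symmetrization :: "nat \<Rightarrow> (nat set \<Rightarrow> bool) \<Rightarrow> real poly \<Rightarrow> bool" where
  "is_symmetrization n f p \<longleftrightarrow> degree p \<le> ml_degree n f \<and>
     (\<forall>k\<le>n. poly p (real k) =
        real (card {S. S \<subseteq> {..<n} \<and> card S = k \<and> f S}) / real (n choose k))"

end

theory Submission
  imports Defs
begin

lemma third_diff:
  fixes f0 f1 f2 f3 :: "real \<Rightarrow> real" and x0 :: real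
  assumes d0: "\<And>x. DERIV f0 x :> f1 x"
    and d1: "\<And>x. DERIV f1 x :> f2 x"
    and d2: "\<And>x. DERIV f2 x :> f3 x"
  shows "\<exists>\<xi>. x0 < \<xi> \<and> \<xi> < x0 + 3 \<and>
     f0 (x0+3) - 3 * f0 (x0+2) + 3 * f0 (x0+1) - f0 x0 = f3 \<xi>"
proof -
  have sh: "\<And>g g' c x. (\<And>y. DERIV g y :> g' y) \<Longrightarrow> DERIV (\<lambda>x. g (x + c)) x :> g' (x + c)"
    by (subst DERIV_shift[symmetric]) auto
  have "\<And>x. DERIV (\<lambda>x. f0 (x+2) - 2 * f0 (x+1) + f0 x) x :> f1 (x+2) - 2 * f1 (x+1) + f1 x"
    by (intro DERIV_add DERIV_diff DERIV_cmult sh d0)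
  from MVT2[of x0 "x0+1", OF _ this]
  obtain \<eta> where e: "x0 < \<eta>" "\<eta> < x0 + 1"
    "(f0 (x0+1+2) - 2 * f0 (x0+1+1) + f0 (x0+1)) - (f0 (x0+2) - 2 * f0 (x0+1) + f0 x0)
      = (x0 + 1 - x0) * (f1 (\<eta>+2) - 2 * f1 (\<eta>+1) + f1 \<eta>)" by auto
  have "\<And>x. DERIV (\<lambda>x. f1 (x+1) - f1 x) x :> f2 (x+1) - f2 x"
    by (intro DERIV_add DERIV_diff DERIV_cmult sh d1)
  from MVT2[of \<eta> "\<eta>+1", OF _ this]
  obtain \<zeta> where z: "\<eta> < \<zeta>" "\<zeta> < \<eta> + 1"
    "(f1 (\<eta>+1+1) - f1 (\<eta>+1)) - (f1 (\<eta>+1) - f1 \<eta>) = (\<eta> + 1 - \<eta>) * (f2 (\<zeta>+1) - f2 \<zeta>)" by auto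
  from MVT2[of \<zeta> "\<zeta>+1", OF _ d2]
  obtain \<xi> where x: "\<zeta> < \<xi>" "\<xi> < \<zeta> + 1"
    "f2 (\<zeta>+1) - f2 \<zeta> = (\<zeta> + 1 - \<zeta>) * f3 \<xi>" by auto
  have "f0 (x0+3) - 3 * f0 (x0+2) + 3 * f0 (x0+1) - f0 x0 = f3 \<xi>"
    using e(3) z(3) x(3) by (simp add: algebra_simps numeral_eq_Suc)
  moreover have "x0 < \<xi> \<and> \<xi> < x0 + 3" using e z x by linarith
  ultimately show ?thesis by blast
qed

theorem lemma2:
  fixes n :: nat and f :: "nat set \<Rightarrow> bool" and p :: "real poly"
  assumes "n \<ge> 4"
    and "fully_sensitive_at_0 n f"
    and "is_symmetrization n f p"
  shows "(SUP x\<in>{0..real n}. \<bar>poly (pderiv (pderiv (pderiv p))) x\<bar>) \<ge> 1 - poly p 3"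
proof -
  have pk: "\<And>k. k \<le> n \<Longrightarrow> poly p (real k) =
        real (card {S. S \<subseteq> {..<n} \<and> card S = k \<and> f S}) / real (n choose k)"
    using assms(3) unfolding is_symmetrization_def by auto
  have chk: "card {S. S \<subseteq> {..<n} \<and> card S = k} = n choose k" for k
    using n_subsets[of "{..<n}" k] by simp
  have le1: "poly p (real k) \<le> 1" if "k \<le> n" for k
  proof -
    have "card {S. S \<subseteq> {..<n} \<and> card S = k \<and> f S} \<le> card {S. S \<subseteq> {..<n} \<and> card S = k}"
      by (rule card_mono) auto
    then show ?thesis using pk[OF that] chk[of k]
      by (auto simp add: divide_le_eq_1)
  qed
  have ge0: "poly p (real k) \<ge> 0" if "k \<le> n" for k
    using pk[OF that] by simp
  have p0: "poly p 0 = 0"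
  proof -
    have "{S. S \<subseteq> {..<n} \<and> card S = 0 \<and> f S} = {}"
      using assms(2) unfolding fully_sensitive_at_0_def
      by (auto dest: finite_subset[OF _ finite_lessThan])
    then show ?thesis using pk[of 0] by simp
  qed
  have p1: "poly p 1 = 1"
  proof -
    have "{S. S \<subseteq> {..<n} \<and> card S = 1 \<and> f S} = {S. S \<subseteq> {..<n} \<and> card S = 1}"
      using assms(2) unfolding fully_sensitive_at_0_def
      by (auto simp: card_Suc_eq)
    then show ?thesis using pk[of 1] chk[of 1] assms(1) by simp
  qed
  have a1: "poly p 2 \<le> 1" using le1[of 2] assms(1) by simp
  have b01: "poly p 3 \<ge> 0" "poly p 3 \<le> 1" using le1[of 3] ge0[of 3] assms(1) by simp_all
  have c0: "poly p 4 \<ge> 0" using ge0[of 4] assms(1) by simp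
  define g where "g = (\<lambda>x. \<bar>poly (pderiv (pderiv (pderiv p))) x\<bar>)"
  have bdd: "bdd_above (g ` {0..real n})"
  proof -
    have "continuous_on {0..real n} g" unfolding g_def
      by (intro continuous_intros)
    then have "compact (g ` {0..real n})"
      by (intro compact_continuous_image) auto
    then obtain s where "\<forall>t\<in>g ` {0..real n}. t \<le> s"
      using compact_attains_sup[of "g ` {0..real n}"] by auto
    then show ?thesis by (auto simp: bdd_above_def)
  qed
  have key: "\<exists>\<xi>\<in>{0..real n}. g \<xi> \<ge> 1 - poly p 3"
  proof (cases "poly p 2 \<le> (2 + 2 * poly p 3) / 3")
    case True
    obtain \<xi> where x: "0 < \<xi>" "\<xi> < 0 + 3"
      "poly p (0+3) - 3 * poly p (0+2) + 3 * poly p (0+1) - poly p 0 = poly (pderiv (pderiv (pderiv p))) \<xi>"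
      using third_diff[of "poly p" "poly (pderiv p)" "poly (pderiv (pderiv p))"
          "poly (pderiv (pderiv (pderiv p)))" 0] by (auto intro: poly_DERIV)
    have "g \<xi> \<ge> 1 - poly p 3" unfolding g_def using x(3) True p0 p1 by simp
    moreover have "\<xi> \<in> {0..real n}" using x assms(1) by simp
    ultimately show ?thesis by blast
  next
    case False
    obtain \<xi> where x: "1 < \<xi>" "\<xi> < 1 + 3"
      "poly p (1+3) - 3 * poly p (1+2) + 3 * poly p (1+1) - poly p 1 = poly (pderiv (pderiv (pderiv p))) \<xi>"
      using third_diff[of "poly p" "poly (pderiv p)" "poly (pderiv (pderiv p))"
          "poly (pderiv (pderiv (pderiv p)))" 1] by (auto intro: poly_DERIV)
    have "g \<xi> \<ge> 1 - poly p 3" unfolding g_def using x(3) False p1 c0 by simp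
    moreover have "\<xi> \<in> {0..real n}" using x assms(1) by simp
    ultimately show ?thesis by blast
  qed
  then obtain \<xi> where "\<xi> \<in> {0..real n}" "g \<xi> \<ge> 1 - poly p 3" by blast
  then have "1 - poly p 3 \<le> (SUP x\<in>{0..real n}. g x)"
    using cSUP_upper[OF _ bdd] order_trans by blast
  then show ?thesis unfolding g_def .
qed

end
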